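(* Let $\Gamma$ be an angled $G$-graph such that for each subgroup $K\le G$, every regular $K$-section of $\Gamma$ has curvature $\le\alpha$, where $\alpha\le0$. Suppose $H$ is a subgroup of $G$ and $\Delta$ is a non-empty spurless $H$-section of $\Gamma$. Then: (1) if $\Delta$ contains an edge, $\kappa(H,\Delta)\le\alpha$; (2) $\kappa(H,\Delta)>0$ if and only if $\Delta$ is a single vertex and $H$ is a finite group.
   Context: An angled $G$-graph is a graph with a $G$-action and a $G$-invariant map $\measuredangle$ from edges to $\mathbb R$. For a group $K$, $|K|^{-1}=1/|K|$ if $K$ finite, else $0$. For a graph $\Delta$ with a $K$-action and finitely many $K$-orbits of cells, $\kappa(K,\Delta)=2\pi|K|^{-1}-\sum_v\pi|K_v|^{-1}+\sum_e(\pi-\measuredangle(e))|K_e|^{-1}$ (sums over orbit representatives of vertices and edges; $K_v,K_e$ stabilizers in $K$); this is the curvature of $\Delta$. For $H\le G$, an $H$-section of $\Gamma$ is an $H$-invariant subgraph with finitely many $H$-orbits of cells; it is spurless if it has no vertex of valence one, and regular if it is spurless, connected, and has at least one edge. *)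

theory Defs
  imports "HOL-Algebra.Group" "HOL-Library.Multiset" Complex_Main
begin

text \<open>A graph is given by a vertex set V, an edge set E and an endpoint map
  ends assigning to each edge the multiset of its two endpoints (loops and
  multiple edges allowed).\<close>

definition graph :: "'v set \<Rightarrow> 'e set \<Rightarrow> ('e \<Rightarrow> 'v multiset) \<Rightarrow> bool" where
  "graph V E ends \<longleftrightarrow> (\<forall>e\<in>E. size (ends e) = 2 \<and> set_mset (ends e) \<subseteq> V)"

definition G_graph ::
  "('g, 'b) monoid_scheme \<Rightarrow> 'v set \<Rightarrow> 'e set \<Rightarrow> ('e \<Rightarrow> 'v multiset)
    \<Rightarrow> ('g \<Rightarrow> 'v \<Rightarrow> 'v) \<Rightarrow> ('g \<Rightarrow> 'e \<Rightarrow> 'e) \<Rightarrow> bool" where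
  "G_graph G V E ends actv acte \<longleftrightarrow>
     group G \<and> graph V E ends \<and>
     (\<forall>g\<in>carrier G. actv g ` V \<subseteq> V \<and> acte g ` E \<subseteq> E) \<and>
     (\<forall>v\<in>V. actv \<one>\<^bsub>G\<^esub> v = v) \<and> (\<forall>e\<in>E. acte \<one>\<^bsub>G\<^esub> e = e) \<and>
     (\<forall>g\<in>carrier G. \<forall>h\<in>carrier G. \<forall>v\<in>V. actv (g \<otimes>\<^bsub>G\<^esub> h) v = actv g (actv h v)) \<and>
     (\<forall>g\<in>carrier G. \<forall>h\<in>carrier G. \<forall>e\<in>E. acte (g \<otimes>\<^bsub>G\<^esub> h) e = acte g (acte h e)) \<and>
     (\<forall>g\<in>carrier G. \<forall>e\<in>E. ends (acte g e) = image_mset (actv g) (ends e))"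

definition angled_G_graph ::
  "('g, 'b) monoid_scheme \<Rightarrow> 'v set \<Rightarrow> 'e set \<Rightarrow> ('e \<Rightarrow> 'v multiset)
    \<Rightarrow> ('g \<Rightarrow> 'v \<Rightarrow> 'v) \<Rightarrow> ('g \<Rightarrow> 'e \<Rightarrow> 'e) \<Rightarrow> ('e \<Rightarrow> real) \<Rightarrow> bool" where
  "angled_G_graph G V E ends actv acte ang \<longleftrightarrow>
     G_graph G V E ends actv acte \<and>
     (\<forall>g\<in>carrier G. \<forall>e\<in>E. ang (acte g e) = ang e)"

definition inv_card :: "'a set \<Rightarrow> real" where
  "inv_card K = (if finite K then 1 / real (card K) else 0)"

definition orbit :: "'g set \<Rightarrow> ('g \<Rightarrow> 'a \<Rightarrow> 'a) \<Rightarrow> 'a \<Rightarrow> 'a set" where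
  "orbit K act x = (\<lambda>k. act k x) ` K"

definition orbits :: "'g set \<Rightarrow> ('g \<Rightarrow> 'a \<Rightarrow> 'a) \<Rightarrow> 'a set \<Rightarrow> 'a set set" where
  "orbits K act S = orbit K act ` S"

definition stab :: "'g set \<Rightarrow> ('g \<Rightarrow> 'a \<Rightarrow> 'a) \<Rightarrow> 'a \<Rightarrow> 'g set" where
  "stab K act x = {k \<in> K. act k x = x}"

definition curvature ::
  "'g set \<Rightarrow> ('g \<Rightarrow> 'v \<Rightarrow> 'v) \<Rightarrow> ('g \<Rightarrow> 'e \<Rightarrow> 'e) \<Rightarrow> ('e \<Rightarrow> real)
    \<Rightarrow> 'v set \<Rightarrow> 'e set \<Rightarrow> real" where
  "curvature K actv acte ang DV DE =
     2 * pi * inv_card K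
     - (\<Sum>Orb\<in>orbits K actv DV. pi * inv_card (stab K actv (SOME v. v \<in> Orb)))
     + (\<Sum>Orb\<in>orbits K acte DE. (pi - ang (SOME e. e \<in> Orb)) * inv_card (stab K acte (SOME e. e \<in> Orb)))"

definition H_section ::
  "'g set \<Rightarrow> 'v set \<Rightarrow> 'e set \<Rightarrow> ('e \<Rightarrow> 'v multiset)
    \<Rightarrow> ('g \<Rightarrow> 'v \<Rightarrow> 'v) \<Rightarrow> ('g \<Rightarrow> 'e \<Rightarrow> 'e) \<Rightarrow> 'v set \<Rightarrow> 'e set \<Rightarrow> bool" where
  "H_section H V E ends actv acte DV DE \<longleftrightarrow>
     DV \<subseteq> V \<and> DE \<subseteq> E \<and> (\<forall>e\<in>DE. set_mset (ends e) \<subseteq> DV) \<and>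
     (\<forall>h\<in>H. actv h ` DV \<subseteq> DV \<and> acte h ` DE \<subseteq> DE) \<and>
     finite (orbits H actv DV) \<and> finite (orbits H acte DE)"

text \<open>Valence one: exactly one edge-end at v (a loop counts twice).\<close>
definition valence_one :: "'e set \<Rightarrow> ('e \<Rightarrow> 'v multiset) \<Rightarrow> 'v \<Rightarrow> bool" where
  "valence_one DE ends v \<longleftrightarrow>
     finite {e \<in> DE. v \<in># ends e} \<and> (\<Sum>e\<in>{e \<in> DE. v \<in># ends e}. count (ends e) v) = 1"

definition spurless :: "'v set \<Rightarrow> 'e set \<Rightarrow> ('e \<Rightarrow> 'v multiset) \<Rightarrow> bool" where
  "spurless DV DE ends \<longleftrightarrow> (\<forall>v\<in>DV. \<not> valence_one DE ends v)"

definition graph_connected :: "'v set \<Rightarrow> 'e set \<Rightarrow> ('e \<Rightarrow> 'v multiset) \<Rightarrow> bool" where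
  "graph_connected DV DE ends \<longleftrightarrow>
     (\<forall>u\<in>DV. \<forall>w\<in>DV. (u, w) \<in> {(x, y). \<exists>e\<in>DE. ends e = {#x, y#}}\<^sup>*)"

definition regular_section ::
  "'g set \<Rightarrow> 'v set \<Rightarrow> 'e set \<Rightarrow> ('e \<Rightarrow> 'v multiset)
    \<Rightarrow> ('g \<Rightarrow> 'v \<Rightarrow> 'v) \<Rightarrow> ('g \<Rightarrow> 'e \<Rightarrow> 'e) \<Rightarrow> 'v set \<Rightarrow> 'e set \<Rightarrow> bool" where
  "regular_section H V E ends actv acte DV DE \<longleftrightarrow>
     H_section H V E ends actv acte DV DE \<and> spurless DV DE ends \<and>
     graph_connected DV DE ends \<and> DE \<noteq> {}"

end

theory Submission
  imports Defs
begin

locale gact = group G for G :: "('g,'b) monoid_scheme" (structure) +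
  fixes act :: "'g \<Rightarrow> 'a \<Rightarrow> 'a" and S :: "'a set"
  assumes act_closed: "\<lbrakk>g \<in> carrier G; x \<in> S\<rbrakk> \<Longrightarrow> act g x \<in> S"
    and act_one: "x \<in> S \<Longrightarrow> act \<one> x = x"
    and act_mult: "\<lbrakk>g \<in> carrier G; h \<in> carrier G; x \<in> S\<rbrakk> \<Longrightarrow> act (g \<otimes> h) x = act g (act h x)"
begin

lemma act_inv: "\<lbrakk>g \<in> carrier G; x \<in> S\<rbrakk> \<Longrightarrow> act (inv g) (act g x) = x"
  by (metis act_mult act_one inv_closed l_inv)

lemma act_inv': "\<lbrakk>g \<in> carrier G; x \<in> S\<rbrakk> \<Longrightarrow> act g (act (inv g) x) = x"
  by (metis act_mult act_one inv_closed r_inv)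

lemma lcanc: "\<lbrakk>h \<in> carrier G; k \<in> carrier G\<rbrakk> \<Longrightarrow> inv h \<otimes> (h \<otimes> k) = k"
  by (simp add: m_assoc[symmetric])
lemma lcanc2: "\<lbrakk>h \<in> carrier G; k \<in> carrier G\<rbrakk> \<Longrightarrow> h \<otimes> (inv h \<otimes> k) = k"
  by (simp add: m_assoc[symmetric])
lemma conj1: "\<lbrakk>h \<in> carrier G; k \<in> carrier G\<rbrakk> \<Longrightarrow> inv h \<otimes> (h \<otimes> k \<otimes> inv h) \<otimes> h = k"
  by (simp add: m_assoc lcanc)
lemma conj2: "\<lbrakk>h \<in> carrier G; k \<in> carrier G\<rbrakk> \<Longrightarrow> h \<otimes> (inv h \<otimes> k \<otimes> h) \<otimes> inv h = k"
  by (simp add: m_assoc lcanc2)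

lemma stab_conj:
  assumes H: "subgroup H G" and h: "h \<in> H" and x: "x \<in> S"
  shows "inv_card (stab H act (act h x)) = inv_card (stab H act x)"
proof -
  have hG: "h \<in> carrier G" by (rule subgroup.mem_carrier[OF H h])
  have bij: "bij_betw (\<lambda>k. h \<otimes> k \<otimes> inv h) (stab H act x) (stab H act (act h x))"
  proof (rule bij_betw_byWitness[where f' = "\<lambda>k. inv h \<otimes> k \<otimes> h"])
    show "\<forall>k\<in>stab H act x. inv h \<otimes> (h \<otimes> k \<otimes> inv h) \<otimes> h = k"
      using H hG conj1 unfolding stab_def by (blast dest: subgroup.mem_carrier)
    show "\<forall>k\<in>stab H act (act h x). h \<otimes> (inv h \<otimes> k \<otimes> h) \<otimes> inv h = k"
      using H hG conj2 unfolding stab_def by (blast dest: subgroup.mem_carrier)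
    show "(\<lambda>k. h \<otimes> k \<otimes> inv h) ` stab H act x \<subseteq> stab H act (act h x)"
    proof
      fix y assume "y \<in> (\<lambda>k. h \<otimes> k \<otimes> inv h) ` stab H act x"
      then obtain k where k: "k \<in> H" "act k x = x" and y: "y = h \<otimes> k \<otimes> inv h"
        by (auto simp: stab_def)
      have kG: "k \<in> carrier G" by (rule subgroup.mem_carrier[OF H k(1)])
      have "y \<in> H" using y k h H by (simp add: subgroup.m_closed subgroup.m_inv_closed)
      moreover have "act y (act h x) = act h x"
      proof -
        have "act y (act h x) = act (h \<otimes> k) (act (inv h) (act h x))"
          unfolding y using kG hG x by (intro act_mult) (auto intro: act_closed)
        also have "\<dots> = act (h \<otimes> k) x" using hG x act_inv by simp
        also have "\<dots> = act h (act k x)" using hG kG x act_mult by blast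
        finally show ?thesis using k(2) by simp
      qed
      ultimately show "y \<in> stab H act (act h x)" by (simp add: stab_def)
    qed
    show "(\<lambda>k. inv h \<otimes> k \<otimes> h) ` stab H act (act h x) \<subseteq> stab H act x"
    proof
      fix y assume "y \<in> (\<lambda>k. inv h \<otimes> k \<otimes> h) ` stab H act (act h x)"
      then obtain k where k: "k \<in> H" "act k (act h x) = act h x" and y: "y = inv h \<otimes> k \<otimes> h"
        by (auto simp: stab_def)
      have kG: "k \<in> carrier G" by (rule subgroup.mem_carrier[OF H k(1)])
      have "y \<in> H" using y k h H by (simp add: subgroup.m_closed subgroup.m_inv_closed)
      moreover have "act y x = x"
      proof -
        have "act y x = act (inv h \<otimes> k) (act h x)"
          unfolding y using kG hG x by (intro act_mult) (auto intro: act_closed)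
        also have "\<dots> = act (inv h) (act k (act h x))" using hG kG x act_mult act_closed by simp
        also have "\<dots> = x" using k(2) act_inv hG x by simp
        finally show ?thesis .
      qed
      ultimately show "y \<in> stab H act x" by (simp add: stab_def)
    qed
  qed
  show ?thesis unfolding inv_card_def
    using bij_betw_finite[OF bij] bij_betw_same_card[OF bij] by simp
qed

lemma orbit_self: "\<lbrakk>subgroup H G; x \<in> S\<rbrakk> \<Longrightarrow> x \<in> orbit H act x"
  unfolding orbit_def using act_one subgroup.one_closed by (metis image_eqI)

lemma orbit_sub: "\<lbrakk>\<forall>h\<in>H. \<forall>t\<in>T. act h t \<in> T; x \<in> T\<rbrakk> \<Longrightarrow> orbit H act x \<subseteq> T"
  unfolding orbit_def by auto

lemma orbit_act: assumes H: "subgroup H G" and h: "h \<in> H" and x: "x \<in> S"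
  shows "orbit H act (act h x) = orbit H act x"
proof
  have hG: "h \<in> carrier G" by (rule subgroup.mem_carrier[OF H h])
  show "orbit H act (act h x) \<subseteq> orbit H act x"
  proof
    fix y assume "y \<in> orbit H act (act h x)"
    then obtain k where k: "k \<in> H" "y = act k (act h x)" unfolding orbit_def by auto
    then have "y = act (k \<otimes> h) x" using H hG x by (simp add: act_mult subgroup.mem_carrier)
    moreover have "k \<otimes> h \<in> H" using H k h by (simp add: subgroup.m_closed)
    ultimately show "y \<in> orbit H act x" unfolding orbit_def by auto
  qed
  show "orbit H act x \<subseteq> orbit H act (act h x)"
  proof
    fix y assume "y \<in> orbit H act x"
    then obtain k where k: "k \<in> H" "y = act k x" unfolding orbit_def by auto
    have kG: "k \<in> carrier G" by (rule subgroup.mem_carrier[OF H k(1)])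
    have "act (k \<otimes> inv h) (act h x) = act k (act (inv h) (act h x))"
      using kG hG x by (intro act_mult) (auto intro: act_closed)
    then have "y = act (k \<otimes> inv h) (act h x)" using k(2) act_inv[OF hG x] by simp
    moreover have "k \<otimes> inv h \<in> H" using H k h by (simp add: subgroup.m_closed subgroup.m_inv_closed)
    ultimately show "y \<in> orbit H act (act h x)" unfolding orbit_def by auto
  qed
qed

lemma orbit_mem_eq: "\<lbrakk>subgroup H G; x \<in> S; y \<in> orbit H act x\<rbrakk> \<Longrightarrow> orbit H act y = orbit H act x"
proof -
  assume H: "subgroup H G" and x: "x \<in> S" and y: "y \<in> orbit H act x"
  then obtain k where k: "k \<in> H" "y = act k x" unfolding orbit_def by auto
  show ?thesis unfolding k(2) by (rule orbit_act[OF H k(1) x])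
qed

lemma orbit_some: "\<lbrakk>subgroup H G; x \<in> S\<rbrakk> \<Longrightarrow> (SOME y. y \<in> orbit H act x) \<in> orbit H act x"
  by (rule someI[where P="\<lambda>y. y \<in> orbit H act x", OF orbit_self])

lemma sum_orbits_Un:
  assumes H: "subgroup H G" and T1: "T1 \<subseteq> S" and T2: "T2 \<subseteq> S"
    and i1: "\<forall>h\<in>H. \<forall>t\<in>T1. act h t \<in> T1" and i2: "\<forall>h\<in>H. \<forall>t\<in>T2. act h t \<in> T2"
    and d: "T1 \<inter> T2 = {}"
    and f1: "finite (orbits H act T1)" and f2: "finite (orbits H act T2)"
  shows "sum \<Phi> (orbits H act (T1 \<union> T2)) = sum \<Phi> (orbits H act T1) + sum \<Phi> (orbits H act T2)"
proof -
  have disj: "orbits H act T1 \<inter> orbits H act T2 = {}"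
  proof (rule ccontr)
    assume "orbits H act T1 \<inter> orbits H act T2 \<noteq> {}"
    then obtain t1 t2 where t: "t1 \<in> T1" "t2 \<in> T2" "orbit H act t1 = orbit H act t2"
      unfolding orbits_def by auto
    have a: "t1 \<in> orbit H act t1" using orbit_self[OF H] t(1) T1 by blast
    have b: "orbit H act t2 \<subseteq> T2" using orbit_sub[OF i2 t(2)] .
    show False using t a b d by blast
  qed
  have eq: "orbits H act (T1 \<union> T2) = orbits H act T1 \<union> orbits H act T2"
    unfolding orbits_def by (rule image_Un)
  show ?thesis unfolding eq by (rule sum.union_disjoint[OF f1 f2 disj])
qed

lemma transfer:
  assumes H: "subgroup H G" and K: "subgroup K G" and KH: "K \<subseteq> H" and T: "T \<subseteq> S"
    and condK: "\<And>h t. h \<in> H \<Longrightarrow> t \<in> T \<Longrightarrow> act h t \<in> T \<longleftrightarrow> h \<in> K"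
    and cinv: "\<And>h x. h \<in> H \<Longrightarrow> x \<in> S \<Longrightarrow> c (act h x) = c x"
  shows "bij_betw (\<lambda>P. orbit H act (SOME x. x \<in> P)) (orbits K act T) (orbits H act (\<Union>h\<in>H. act h ` T))"
    and "(\<Sum>Q\<in>orbits H act (\<Union>h\<in>H. act h ` T). c (SOME x. x \<in> Q) * inv_card (stab H act (SOME x. x \<in> Q)))
       = (\<Sum>P\<in>orbits K act T. c (SOME x. x \<in> P) * inv_card (stab K act (SOME x. x \<in> P)))"
proof -
  define r where "r P = (SOME x. x \<in> P)" for P :: "'a set"
  define HT where "HT = (\<Union>h\<in>H. act h ` T)"
  have HG: "\<And>h. h \<in> H \<Longrightarrow> h \<in> carrier G" by (rule subgroup.mem_carrier[OF H])
  have rP: "r P \<in> T \<and> r P \<in> P \<and> P = orbit K act (r P)" if PP: "P \<in> orbits K act T" for P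
  proof -
    obtain t where t: "t \<in> T" "P = orbit K act t" using PP unfolding orbits_def by auto
    have "r P \<in> P" unfolding r_def t(2) using orbit_some K t T by auto
    moreover then obtain k where "k \<in> K" "r P = act k t" using t unfolding orbit_def by auto
    moreover then have "r P \<in> T" using condK KH t by auto
    ultimately show ?thesis using orbit_mem_eq[OF K, of t "r P"] t T by auto
  qed
  have inj: "inj_on (\<lambda>P. orbit H act (r P)) (orbits K act T)"
  proof (rule inj_onI)
    fix P P' assume P: "P \<in> orbits K act T" and P': "P' \<in> orbits K act T"
      and eq: "orbit H act (r P) = orbit H act (r P')"
    have "r P' \<in> orbit H act (r P)" using eq orbit_self[OF H] rP[OF P'] T by auto
    then obtain h where h: "h \<in> H" "r P' = act h (r P)" unfolding orbit_def by auto
    then have "h \<in> K" using condK rP[OF P] rP[OF P'] by auto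
    then have "orbit K act (r P') = orbit K act (r P)" using h orbit_act[OF K] rP[OF P] T by auto
    then show "P = P'" using rP[OF P] rP[OF P'] by auto
  qed
  have img: "(\<lambda>P. orbit H act (r P)) ` orbits K act T = orbits H act HT"
  proof
    show "(\<lambda>P. orbit H act (r P)) ` orbits K act T \<subseteq> orbits H act HT"
    proof
      fix Q assume "Q \<in> (\<lambda>P. orbit H act (r P)) ` orbits K act T"
      then obtain P where P: "P \<in> orbits K act T" "Q = orbit H act (r P)" by auto
      have "r P \<in> HT" unfolding HT_def using rP[OF P(1)] T act_one subgroup.one_closed[OF H]
        by (metis UN_iff image_eqI subsetD)
      then show "Q \<in> orbits H act HT" using P unfolding orbits_def by auto
    qed
    show "orbits H act HT \<subseteq> (\<lambda>P. orbit H act (r P)) ` orbits K act T"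
    proof
      fix Q assume "Q \<in> orbits H act HT"
      then obtain h t where ht: "h \<in> H" "t \<in> T" "Q = orbit H act (act h t)"
        unfolding orbits_def HT_def by auto
      have Q: "Q = orbit H act t" using ht orbit_act[OF H] T by auto
      define P where "P = orbit K act t"
      have P: "P \<in> orbits K act T" using ht unfolding P_def orbits_def by auto
      have "r P \<in> orbit K act t" using rP[OF P] P_def by auto
      then obtain k where k: "k \<in> K" "r P = act k t" unfolding orbit_def by auto
      have "k \<in> H" using k(1) KH by auto
      then have "orbit H act (r P) = Q" unfolding Q k(2) using orbit_act[OF H _ ] ht T by auto
      then show "Q \<in> (\<lambda>P. orbit H act (r P)) ` orbits K act T" using P by auto
    qed
  qed
  show bij: "bij_betw (\<lambda>P. orbit H act (SOME x. x \<in> P)) (orbits K act T) (orbits H act (\<Union>h\<in>H. act h ` T))"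
    using inj img unfolding bij_betw_def r_def HT_def by simp
  have val: "c (r (orbit H act (r P))) * inv_card (stab H act (r (orbit H act (r P))))
      = c (r P) * inv_card (stab K act (r P))" if P: "P \<in> orbits K act T" for P
  proof -
    have rPS: "r P \<in> S" using rP[OF P] T by auto
    have "r (orbit H act (r P)) \<in> orbit H act (r P)" using orbit_some[OF H rPS] unfolding r_def .
    then obtain h where h: "h \<in> H" "r (orbit H act (r P)) = act h (r P)" unfolding orbit_def by auto
    have st: "stab H act (r P) = stab K act (r P)"
    proof -
      have "x \<in> K" if "x \<in> H" "act x (r P) = r P" for x
        using condK[OF that(1), of "r P"] that rP[OF P] by simp
      then show ?thesis using KH unfolding stab_def by auto
    qed
    show ?thesis using h cinv rPS stab_conj[OF H h(1) rPS] st by simp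
  qed
  show "(\<Sum>Q\<in>orbits H act (\<Union>h\<in>H. act h ` T). c (SOME x. x \<in> Q) * inv_card (stab H act (SOME x. x \<in> Q)))
       = (\<Sum>P\<in>orbits K act T. c (SOME x. x \<in> P) * inv_card (stab K act (SOME x. x \<in> P)))"
    using sum.reindex_bij_betw[OF bij, of "\<lambda>Q. c (SOME x. x \<in> Q) * inv_card (stab H act (SOME x. x \<in> Q))"]
      val unfolding r_def by (simp cong: sum.cong)
qed


lemma inv_iff:
  assumes H: "subgroup H G" and A: "\<And>h a. h \<in> H \<Longrightarrow> a \<in> A \<Longrightarrow> act h a \<in> A"
    and h: "h \<in> H" and x: "x \<in> S"
  shows "act h x \<in> A \<longleftrightarrow> x \<in> A"
proof
  have hG: "h \<in> carrier G" by (rule subgroup.mem_carrier[OF H h])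
  assume "act h x \<in> A"
  then have "act (inv h) (act h x) \<in> A" using A subgroup.m_inv_closed[OF H h] by blast
  then show "x \<in> A" using act_inv[OF hG x] by simp
next
  assume "x \<in> A" then show "act h x \<in> A" using A h by blast
qed

lemma stab_subgroup:
  assumes H: "subgroup H G" and x: "x \<in> S"
  shows "subgroup (stab H act x) G"
proof (rule subgroupI)
  show "stab H act x \<subseteq> carrier G" unfolding stab_def using subgroup.mem_carrier[OF H] by auto
  show "stab H act x \<noteq> {}" unfolding stab_def using subgroup.one_closed[OF H] act_one[OF x] by auto
  fix a assume a: "a \<in> stab H act x"
  then have aH: "a \<in> H" and ax: "act a x = x" unfolding stab_def by auto
  have aG: "a \<in> carrier G" by (rule subgroup.mem_carrier[OF H aH])
  have "act (inv a) x = x" using act_inv[OF aG x] ax by simp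
  then show "inv a \<in> stab H act x" unfolding stab_def using subgroup.m_inv_closed[OF H aH] by simp
  fix b assume b: "b \<in> stab H act x"
  then have bH: "b \<in> H" and bx: "act b x = x" unfolding stab_def by auto
  have bG: "b \<in> carrier G" by (rule subgroup.mem_carrier[OF H bH])
  have "act (a \<otimes> b) x = x" using act_mult[OF aG bG x] ax bx by simp
  then show "a \<otimes> b \<in> stab H act x" unfolding stab_def using subgroup.m_closed[OF H aH bH] by simp
qed


lemma coset_card:
  assumes H: "subgroup H G" and fin: "finite H" and St: "subgroup St G" and StH: "St \<subseteq> H"
    and g: "g \<in> H" and gn: "g \<notin> St"
  shows "2 * card St \<le> card H"
proof -
  have gG: "g \<in> carrier G" by (rule subgroup.mem_carrier[OF H g])
  have SG: "\<And>s. s \<in> St \<Longrightarrow> s \<in> carrier G" by (rule subgroup.mem_carrier[OF St])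
  define gS where "gS = (\<lambda>s. g \<otimes> s) ` St"
  have inj: "inj_on (\<lambda>s. g \<otimes> s) St"
  proof (rule inj_onI)
    fix x y assume x: "x \<in> St" and y: "y \<in> St" and eq: "g \<otimes> x = g \<otimes> y"
    have "x = inv g \<otimes> (g \<otimes> x)" using lcanc[OF gG SG[OF x]] by simp
    also have "\<dots> = inv g \<otimes> (g \<otimes> y)" using eq by simp
    also have "\<dots> = y" using lcanc[OF gG SG[OF y]] by simp
    finally show "x = y" .
  qed
  have cgS: "card gS = card St" unfolding gS_def using card_image[OF inj] .
  have sub: "St \<union> gS \<subseteq> H" unfolding gS_def using StH subgroup.m_closed[OF H g] by blast
  have disj: "St \<inter> gS = {}"
  proof (rule ccontr)
    assume "St \<inter> gS \<noteq> {}"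
    then obtain s where s: "s \<in> St" "g \<otimes> s \<in> St" unfolding gS_def by blast
    have "(g \<otimes> s) \<otimes> inv s \<in> St"
      using subgroup.m_closed[OF St s(2) subgroup.m_inv_closed[OF St s(1)]] .
    moreover have "(g \<otimes> s) \<otimes> inv s = g" using gG SG[OF s(1)] by (simp add: m_assoc)
    ultimately show False using gn by simp
  qed
  have finS: "finite St" using finite_subset[OF StH fin] .
  have fingS: "finite gS" unfolding gS_def using finS by simp
  have "card (St \<union> gS) = card St + card gS" using card_Un_disjoint[OF finS fingS disj] .
  moreover have "card (St \<union> gS) \<le> card H" using card_mono[OF fin sub] .
  ultimately show ?thesis using cgS by simp
qed

end

lemma inv_card_nonneg: "0 \<le> inv_card K" unfolding inv_card_def by auto

lemma inv_card_mono: assumes "K \<subseteq> H" "K \<noteq> {}" shows "inv_card H \<le> inv_card K"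
proof (cases "finite H")
  case True
  then have "finite K" using assms finite_subset by blast
  then have "card K \<le> card H" "0 < card K" using assms True card_mono card_gt_0_iff by auto
  then show ?thesis unfolding inv_card_def using True \<open>finite K\<close> by (simp add: frac_le)
next
  case False then show ?thesis unfolding inv_card_def by auto
qed

definition adj :: "('e \<Rightarrow> 'v multiset) \<Rightarrow> 'e set \<Rightarrow> ('v \<times> 'v) set" where
  "adj ends D = {(x, y). \<exists>e\<in>D. ends e = {#x, y#}}"

lemma adj_sym: "(x,y) \<in> adj ends D \<Longrightarrow> (y,x) \<in> adj ends D"
  unfolding adj_def by (auto simp: add_mset_commute)

lemma rt_adj_sym: "(x,y) \<in> (adj ends D)\<^sup>* \<Longrightarrow> (y,x) \<in> (adj ends D)\<^sup>*"
proof (induction rule: rtrancl_induct)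
  case base then show ?case by simp
next
  case (step y z) then show ?case using adj_sym converse_rtrancl_into_rtrancl by metis
qed

lemma size2: assumes "size M = 2" shows "\<exists>a b. M = {#a, b#}"
proof -
  have "M \<noteq> {#}" using assms by auto
  then obtain a where "a \<in># M" by (meson multiset_nonemptyE)
  then obtain A where A: "M = add_mset a A" using multi_member_split by metis
  then have "size A = 1" using assms by simp
  then obtain b where "A = {#b#}" using size_1_singleton_mset by blast
  then show ?thesis using A by auto
qed

locale pset =
  fixes G :: "('g,'b) monoid_scheme" and V :: "'v set" and E :: "'e set"
    and ends :: "'e \<Rightarrow> 'v multiset" and actv :: "'g \<Rightarrow> 'v \<Rightarrow> 'v" and acte :: "'g \<Rightarrow> 'e \<Rightarrow> 'e"
    and ang :: "'e \<Rightarrow> real" and \<alpha> :: real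
  assumes angled: "angled_G_graph G V E ends actv acte ang"
    and alpha: "\<alpha> \<le> 0"
    and hyp: "\<And>K DV' DE'. subgroup K G \<Longrightarrow> regular_section K V E ends actv acte DV' DE'
           \<Longrightarrow> curvature K actv acte ang DV' DE' \<le> \<alpha>"

sublocale pset \<subseteq> gv: gact G actv V
  using angled unfolding angled_G_graph_def G_graph_def gact_def gact_axioms_def by blast

sublocale pset \<subseteq> ge: gact G acte E
  using angled unfolding angled_G_graph_def G_graph_def gact_def gact_axioms_def by blast

context pset begin

lemma ends_act: "g \<in> carrier G \<Longrightarrow> e \<in> E \<Longrightarrow> ends (acte g e) = image_mset (actv g) (ends e)"
  using angled unfolding angled_G_graph_def G_graph_def by blast

lemma ends_size: "e \<in> E \<Longrightarrow> size (ends e) = 2"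
  using angled unfolding angled_G_graph_def G_graph_def graph_def by blast

lemma ends_V: "e \<in> E \<Longrightarrow> set_mset (ends e) \<subseteq> V"
  using angled unfolding angled_G_graph_def G_graph_def graph_def by blast

lemma ang_inv: "g \<in> carrier G \<Longrightarrow> e \<in> E \<Longrightarrow> ang (acte g e) = ang e"
  using angled unfolding angled_G_graph_def by blast

lemma adj_act: assumes "g \<in> carrier G" "D \<subseteq> E" "\<And>e. e\<in>D \<Longrightarrow> acte g e \<in> D" "(x,y) \<in> adj ends D"
  shows "(actv g x, actv g y) \<in> adj ends D"
proof -
  obtain e where e: "e \<in> D" "ends e = {#x,y#}" using assms(4) unfolding adj_def by auto
  have "ends (acte g e) = {#actv g x, actv g y#}" using ends_act assms e by auto
  then show ?thesis using assms(3) e(1) unfolding adj_def by blast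
qed

lemma rt_act: assumes "g \<in> carrier G" "D \<subseteq> E" "\<And>e. e\<in>D \<Longrightarrow> acte g e \<in> D" "(x,y) \<in> (adj ends D)\<^sup>*"
  shows "(actv g x, actv g y) \<in> (adj ends D)\<^sup>*"
  using assms(4)
proof (induction rule: rtrancl_induct)
  case base show ?case by simp
next
  case (step y z) then show ?case using adj_act[OF assms(1-3)] by (meson rtrancl.rtrancl_into_rtrancl)
qed

definition VS :: "'g set \<Rightarrow> 'v set \<Rightarrow> real" where
  "VS K A = (\<Sum>Orb\<in>orbits K actv A. pi * inv_card (stab K actv (SOME v. v \<in> Orb)))"

definition ES :: "'g set \<Rightarrow> 'e set \<Rightarrow> real" where
  "ES K B = (\<Sum>Orb\<in>orbits K acte B. (pi - ang (SOME e. e \<in> Orb)) * inv_card (stab K acte (SOME e. e \<in> Orb)))"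

lemma curv_eq: "curvature K actv acte ang A B = 2 * pi * inv_card K - VS K A + ES K B"
  unfolding curvature_def VS_def ES_def by simp

lemma VS_nonneg: "0 \<le> VS K A"
  unfolding VS_def by (rule sum_nonneg) (simp add: inv_card_nonneg)

lemma step:
  assumes H: "subgroup H G" and sec: "H_section H V E ends actv acte DV DE"
    and sp: "spurless DV DE ends" and ne: "DE \<noteq> {}"
    and IH: "\<And>DV' DE'. card (orbits H actv DV') < card (orbits H actv DV) \<Longrightarrow>
        H_section H V E ends actv acte DV' DE' \<Longrightarrow> spurless DV' DE' ends \<Longrightarrow> DE' \<noteq> {} \<Longrightarrow>
        curvature H actv acte ang DV' DE' \<le> \<alpha>"
  shows "curvature H actv acte ang DV DE \<le> \<alpha>"
proof -
  have HG: "\<And>h. h \<in> H \<Longrightarrow> h \<in> carrier G" by (rule subgroup.mem_carrier[OF H])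
  have DVV: "DV \<subseteq> V" and DEE: "DE \<subseteq> E" and endsDV: "\<And>e. e\<in>DE \<Longrightarrow> set_mset (ends e) \<subseteq> DV"
    and invV: "\<And>h x. h \<in> H \<Longrightarrow> x \<in> DV \<Longrightarrow> actv h x \<in> DV"
    and invE: "\<And>h e. h \<in> H \<Longrightarrow> e \<in> DE \<Longrightarrow> acte h e \<in> DE"
    and finV: "finite (orbits H actv DV)" and finE: "finite (orbits H acte DE)"
    using sec unfolding H_section_def by (auto simp: image_subset_iff)
  define R where "R = (adj ends DE)\<^sup>*"
  obtain e0 where e0: "e0 \<in> DE" using ne by auto
  have "ends e0 \<noteq> {#}" using ends_size[of e0] e0 DEE by fastforce
  then obtain v0 where v0: "v0 \<in># ends e0" by (meson multiset_nonemptyE)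
  have v0DV: "v0 \<in> DV" using endsDV e0 v0 by auto
  have RDV: "y \<in> DV" if "(x,y) \<in> R" "x \<in> DV" for x y
    using that(1) unfolding R_def
  proof (induction rule: rtrancl_induct)
    case base then show ?case using that(2) by simp
  next
    case (step y z)
    then obtain e where "e \<in> DE" "ends e = {#y, z#}" unfolding adj_def by auto
    then show ?case using endsDV by fastforce
  qed
  have Ract: "(actv h x, actv h y) \<in> R" if "h \<in> H" "(x,y) \<in> R" for h x y
    using rt_act[OF HG[OF that(1)] DEE invE[OF that(1)] that(2)[unfolded R_def]] unfolding R_def .
  have Rsym: "(y,x) \<in> R" if "(x,y) \<in> R" for x y
    using that unfolding R_def by (rule rt_adj_sym)
  have Rtr: "(x,z) \<in> R" if "(x,y) \<in> R" "(y,z) \<in> R" for x y z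
    using that unfolding R_def by (meson rtrancl_trans)
  define C where "C = {w. (v0,w) \<in> R}"
  have v0C: "v0 \<in> C" unfolding C_def R_def by simp
  have CDV: "C \<subseteq> DV" unfolding C_def using RDV v0DV by blast
  have CV: "C \<subseteq> V" using CDV DVV by blast
  define K where "K = {h\<in>H. actv h v0 \<in> C}"
  have condK: "actv h t \<in> C \<longleftrightarrow> h \<in> K" if h: "h \<in> H" and t: "t \<in> C" for h t
  proof
    have vt: "(v0,t) \<in> R" using t unfolding C_def by simp
    have hvt: "(actv h v0, actv h t) \<in> R" using Ract[OF h vt] .
    { assume "actv h t \<in> C"
      then have "(v0, actv h t) \<in> R" unfolding C_def by simp
      then have "(v0, actv h v0) \<in> R" using Rtr Rsym[OF hvt] by blast
      then show "h \<in> K" unfolding K_def C_def using h by simp }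
    { assume "h \<in> K"
      then have "(v0, actv h v0) \<in> R" unfolding K_def C_def by simp
      then show "actv h t \<in> C" unfolding C_def using Rtr hvt by blast }
  qed
  have KH: "K \<subseteq> H" unfolding K_def by auto
  have Ksub: "subgroup K G"
  proof (rule gv.subgroupI)
    show "K \<subseteq> carrier G" using KH HG by blast
    have "\<one>\<^bsub>G\<^esub> \<in> H" by (rule subgroup.one_closed[OF H])
    moreover have "actv \<one>\<^bsub>G\<^esub> v0 = v0" using gv.act_one v0DV DVV by blast
    ultimately have "\<one>\<^bsub>G\<^esub> \<in> K" unfolding K_def using v0C by simp
    then show "K \<noteq> {}" by blast
  next
    fix a assume a: "a \<in> K"
    then have aH: "a \<in> H" using KH by blast
    have t: "actv a v0 \<in> C" using a unfolding K_def by simp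
    have ia: "inv\<^bsub>G\<^esub> a \<in> H" by (rule subgroup.m_inv_closed[OF H aH])
    have "actv (inv\<^bsub>G\<^esub> a) (actv a v0) = v0" using gv.act_inv HG[OF aH] v0DV DVV by blast
    then show "inv\<^bsub>G\<^esub> a \<in> K" using condK[OF ia t] v0C by simp
  next
    fix a b assume a: "a \<in> K" and b: "b \<in> K"
    then have aH: "a \<in> H" and bH: "b \<in> H" using KH by blast+
    have t: "actv b v0 \<in> C" using b unfolding K_def by simp
    then have "actv a (actv b v0) \<in> C" using condK[OF aH t] a by simp
    moreover have "actv (a \<otimes>\<^bsub>G\<^esub> b) v0 = actv a (actv b v0)"
      using gv.act_mult HG[OF aH] HG[OF bH] v0DV DVV by blast
    moreover have "a \<otimes>\<^bsub>G\<^esub> b \<in> H" by (rule subgroup.m_closed[OF H aH bH])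
    ultimately show "a \<otimes>\<^bsub>G\<^esub> b \<in> K" unfolding K_def by simp
  qed
  define CE where "CE = {e\<in>DE. \<exists>x. x \<in># ends e \<and> x \<in> C}"
  have CEDE: "CE \<subseteq> DE" unfolding CE_def by auto
  have CEE: "CE \<subseteq> E" using CEDE DEE by blast
  have CE_ends: "set_mset (ends e) \<subseteq> C" if e: "e \<in> CE" for e
  proof -
    have eDE: "e \<in> DE" and "\<exists>x. x \<in># ends e \<and> x \<in> C" using e unfolding CE_def by auto
    then obtain x where x: "x \<in># ends e" "x \<in> C" by blast
    have eE: "e \<in> E" using eDE DEE by blast
    obtain a b where ab: "ends e = {#a, b#}" using size2[OF ends_size[OF eE]] by blast
    have adjab: "(a,b) \<in> adj ends DE" unfolding adj_def using eDE ab by blast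
    have "(a,b) \<in> R" "(b,a) \<in> R" unfolding R_def using adjab adj_sym[OF adjab] by auto
    moreover have "x = a \<or> x = b" using x ab by auto
    ultimately have "a \<in> C \<and> b \<in> C" using x(2) Rtr unfolding C_def by blast
    then show ?thesis using ab by auto
  qed
  have condE: "acte h e \<in> CE \<longleftrightarrow> h \<in> K" if h: "h \<in> H" and e: "e \<in> CE" for h e
  proof -
    obtain x where x: "x \<in># ends e" "x \<in> C" using e unfolding CE_def by blast
    have eE: "e \<in> E" using e CEE by blast
    have hx: "actv h x \<in># ends (acte h e)" using ends_act[OF HG[OF h] eE] x(1) by simp
    show ?thesis
    proof
      assume "acte h e \<in> CE"
      then have "actv h x \<in> C" using CE_ends hx by blast
      then show "h \<in> K" using condK[OF h x(2)] by simp
    next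
      assume "h \<in> K"
      then have "actv h x \<in> C" using condK[OF h x(2)] by simp
      moreover have "acte h e \<in> DE" using invE[OF h] e CEDE by blast
      ultimately show "acte h e \<in> CE" unfolding CE_def using hx by blast
    qed
  qed
  define HC where "HC = (\<Union>h\<in>H. actv h ` C)"
  define HCE where "HCE = (\<Union>h\<in>H. acte h ` CE)"
  have trV: "bij_betw (\<lambda>P. orbit H actv (SOME x. x \<in> P)) (orbits K actv C) (orbits H actv HC)"
    "VS H HC = VS K C"
    using gv.transfer[OF H Ksub KH CV, of "\<lambda>_. pi"] condK unfolding VS_def HC_def by auto
  have trE: "bij_betw (\<lambda>P. orbit H acte (SOME x. x \<in> P)) (orbits K acte CE) (orbits H acte HCE)"
    "ES H HCE = ES K CE"
    using ge.transfer[OF H Ksub KH CEE, of "\<lambda>e. pi - ang e"] condE ang_inv HG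
    unfolding ES_def HCE_def by auto
  have HCDV: "HC \<subseteq> DV" unfolding HC_def using CDV invV by blast
  have HCEDE: "HCE \<subseteq> DE" unfolding HCE_def using CEDE invE by blast
  have finHC: "finite (orbits H actv HC)"
    using finV HCDV unfolding orbits_def by (meson finite_subset image_mono)
  have finHCE: "finite (orbits H acte HCE)"
    using finE HCEDE unfolding orbits_def by (meson finite_subset image_mono)
  have finC: "finite (orbits K actv C)" using trV(1) finHC bij_betw_finite by blast
  have finCE: "finite (orbits K acte CE)" using trE(1) finHCE bij_betw_finite by blast
  have conn: "(v0,w) \<in> (adj ends CE)\<^sup>*" if "(v0,w) \<in> R" for w
    using that unfolding R_def
  proof (induction rule: rtrancl_induct)
    case base then show ?case by simp
  next
    case (step y z)
    then obtain e where e: "e \<in> DE" "ends e = {#y, z#}" unfolding adj_def by auto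
    have "y \<in> C" using step(1) unfolding C_def R_def by simp
    then have "e \<in> CE" unfolding CE_def using e by auto
    then have "(y,z) \<in> adj ends CE" unfolding adj_def using e by blast
    then show ?case using step(3) by (meson rtrancl.rtrancl_into_rtrancl)
  qed
  have e0CE: "e0 \<in> CE" unfolding CE_def using e0 v0 v0C by blast
  have valeq: "{e \<in> CE. v \<in># ends e} = {e \<in> DE. v \<in># ends e}" if "v \<in> C" for v
    unfolding CE_def using that by blast
  have regK: "regular_section K V E ends actv acte C CE"
    unfolding regular_section_def
  proof (intro conjI)
    show "H_section K V E ends actv acte C CE"
      unfolding H_section_def using CV CEE CE_ends condK condE KH finC finCE by blast
    show "spurless C CE ends"
      unfolding spurless_def using sp valeq CDV unfolding spurless_def valence_one_def by auto
    show "graph_connected C CE ends"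
      unfolding graph_connected_def
    proof (intro ballI)
      fix u w assume u: "u \<in> C" and w: "w \<in> C"
      have "(v0,u) \<in> (adj ends CE)\<^sup>*" "(v0,w) \<in> (adj ends CE)\<^sup>*" using conn u w unfolding C_def by auto
      then have "(u,w) \<in> (adj ends CE)\<^sup>*" using rt_adj_sym by (meson rtrancl_trans)
      then show "(u, w) \<in> {(x, y). \<exists>e\<in>CE. ends e = {#x, y#}}\<^sup>*" unfolding adj_def .
    qed
    show "CE \<noteq> {}" using e0CE by blast
  qed
  have kK: "curvature K actv acte ang C CE \<le> \<alpha>" using hyp[OF Ksub regK] .
  define DV' where "DV' = DV - HC"
  define DE' where "DE' = DE - HCE"
  have HCinv: "actv h x \<in> HC" if h: "h \<in> H" and x: "x \<in> HC" for h x
  proof -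
    obtain k c where k: "k \<in> H" "c \<in> C" "x = actv k c" using x unfolding HC_def by blast
    have "actv h x = actv (h \<otimes>\<^bsub>G\<^esub> k) c" using gv.act_mult HG[OF h] HG[OF k(1)] k CV by auto
    moreover have "h \<otimes>\<^bsub>G\<^esub> k \<in> H" by (rule subgroup.m_closed[OF H h k(1)])
    ultimately show ?thesis unfolding HC_def using k(2) by blast
  qed
  have HCEinv: "acte h x \<in> HCE" if h: "h \<in> H" and x: "x \<in> HCE" for h x
  proof -
    obtain k c where k: "k \<in> H" "c \<in> CE" "x = acte k c" using x unfolding HCE_def by blast
    have "acte h x = acte (h \<otimes>\<^bsub>G\<^esub> k) c" using ge.act_mult HG[OF h] HG[OF k(1)] k CEE by auto
    moreover have "h \<otimes>\<^bsub>G\<^esub> k \<in> H" by (rule subgroup.m_closed[OF H h k(1)])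
    ultimately show ?thesis unfolding HCE_def using k(2) by blast
  qed
  have HCE_ends: "set_mset (ends e) \<subseteq> HC" if e: "e \<in> HCE" for e
  proof -
    obtain h c where h: "h \<in> H" "c \<in> CE" "e = acte h c" using e unfolding HCE_def by blast
    have "ends e = image_mset (actv h) (ends c)" using ends_act HG[OF h(1)] h CEE by auto
    then show ?thesis using CE_ends[OF h(2)] h(1) unfolding HC_def by auto
  qed
  have DE'_ends: "set_mset (ends e) \<subseteq> DV'" if e: "e \<in> DE'" for e
  proof
    fix x assume x: "x \<in># ends e"
    have eDE: "e \<in> DE" and eH: "e \<notin> HCE" using e unfolding DE'_def by auto
    have eE: "e \<in> E" using eDE DEE by blast
    have xDV: "x \<in> DV" using endsDV eDE x by blast
    show "x \<in> DV'"
    proof (rule ccontr)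
      assume "x \<notin> DV'"
      then have "x \<in> HC" using xDV unfolding DV'_def by blast
      then obtain h c where h: "h \<in> H" "c \<in> C" "x = actv h c" unfolding HC_def by blast
      have hG: "h \<in> carrier G" using HG h(1) .
      have ih: "inv\<^bsub>G\<^esub> h \<in> H" by (rule subgroup.m_inv_closed[OF H h(1)])
      define e' where "e' = acte (inv\<^bsub>G\<^esub> h) e"
      have e'DE: "e' \<in> DE" unfolding e'_def using invE[OF ih eDE] .
      have "ends e' = image_mset (actv (inv\<^bsub>G\<^esub> h)) (ends e)"
        unfolding e'_def using ends_act HG[OF ih] eE by blast
      then have "actv (inv\<^bsub>G\<^esub> h) x \<in># ends e'" using x by simp
      moreover have "actv (inv\<^bsub>G\<^esub> h) x = c" using h gv.act_inv[OF hG] CV by auto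
      ultimately have "e' \<in> CE" unfolding CE_def using e'DE h(2) by auto
      moreover have "acte h e' = e" unfolding e'_def using ge.act_inv'[OF hG eE] .
      ultimately have "e \<in> HCE" unfolding HCE_def using h(1) by blast
      then show False using eH by blast
    qed
  qed
  have DV'V: "DV' \<subseteq> V" and DE'E: "DE' \<subseteq> E" and HCV: "HC \<subseteq> V" and HCEE: "HCE \<subseteq> E"
    unfolding DV'_def DE'_def using DVV DEE HCDV HCEDE by auto
  have DV'inv: "actv h x \<in> DV'" if h: "h \<in> H" and x: "x \<in> DV'" for h x
  proof -
    have xV: "x \<in> V" using x DV'V by blast
    have "actv h x \<notin> HC" using gv.inv_iff[OF H HCinv h xV] x unfolding DV'_def by blast
    then show ?thesis unfolding DV'_def using invV h x unfolding DV'_def by blast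
  qed
  have DE'inv: "acte h x \<in> DE'" if h: "h \<in> H" and x: "x \<in> DE'" for h x
  proof -
    have xE: "x \<in> E" using x DE'E by blast
    have "acte h x \<notin> HCE" using ge.inv_iff[OF H HCEinv h xE] x unfolding DE'_def by blast
    then show ?thesis unfolding DE'_def using invE h x unfolding DE'_def by blast
  qed
  have oV': "orbits H actv DV' \<subseteq> orbits H actv DV" unfolding orbits_def DV'_def by blast
  have oE': "orbits H acte DE' \<subseteq> orbits H acte DE" unfolding orbits_def DE'_def by blast
  have finV': "finite (orbits H actv DV')" using finite_subset[OF oV' finV] .
  have finE': "finite (orbits H acte DE')" using finite_subset[OF oE' finE] .
  have sec': "H_section H V E ends actv acte DV' DE'"
    unfolding H_section_def using DV'V DE'E DE'_ends DV'inv DE'inv finV' finE' by blast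
  have sp': "spurless DV' DE' ends"
  proof -
    have "{e \<in> DE'. v \<in># ends e} = {e \<in> DE. v \<in># ends e}" if v: "v \<in> DV'" for v
    proof -
      have "e \<notin> HCE" if "v \<in># ends e" for e
        using HCE_ends[of e] that v unfolding DV'_def by blast
      then show ?thesis unfolding DE'_def by blast
    qed
    then show ?thesis using sp unfolding spurless_def valence_one_def DV'_def by auto
  qed
  have lt: "card (orbits H actv DV') < card (orbits H actv DV)"
  proof (rule psubset_card_mono[OF finV])
    have "orbit H actv v0 \<in> orbits H actv DV" unfolding orbits_def using v0DV by blast
    moreover have "orbit H actv v0 \<notin> orbits H actv DV'"
    proof
      assume "orbit H actv v0 \<in> orbits H actv DV'"
      then obtain x where x: "x \<in> DV'" "orbit H actv v0 = orbit H actv x" unfolding orbits_def by blast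
      have "x \<in> orbit H actv x" using gv.orbit_self[OF H] x(1) DV'V by blast
      then have "x \<in> orbit H actv v0" using x(2) by simp
      then have "x \<in> HC" unfolding orbit_def HC_def using v0C by blast
      then show False using x(1) unfolding DV'_def by blast
    qed
    ultimately show "orbits H actv DV' \<subset> orbits H actv DV" using oV' by blast
  qed
  have rest: "curvature H actv acte ang DV' DE' \<le> 2 * pi * inv_card H"
  proof (cases "DE' = {}")
    case True
    then have "ES H DE' = 0" unfolding ES_def orbits_def by simp
    then show ?thesis unfolding curv_eq using VS_nonneg[of H DV'] by simp
  next
    case False
    then have "curvature H actv acte ang DV' DE' \<le> \<alpha>" using IH[OF lt sec' sp'] by blast
    moreover have "0 \<le> 2 * pi * inv_card H" using inv_card_nonneg[of H] by simp
    ultimately show ?thesis using alpha by linarith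
  qed
  have dV: "DV = HC \<union> DV'" unfolding DV'_def using HCDV by blast
  have dE: "DE = HCE \<union> DE'" unfolding DE'_def using HCEDE by blast
  have sV: "VS H DV = VS H HC + VS H DV'"
    unfolding VS_def
    by (subst dV, rule gv.sum_orbits_Un[OF H HCV DV'V]) (use HCinv DV'inv finHC finV' in \<open>auto simp: DV'_def\<close>)
  have sE: "ES H DE = ES H HCE + ES H DE'"
    unfolding ES_def
    by (subst dE, rule ge.sum_orbits_Un[OF H HCEE DE'E]) (use HCEinv DE'inv finHCE finE' in \<open>auto simp: DE'_def\<close>)
  have Kne: "K \<noteq> {}" using subgroup.one_closed[OF Ksub] by blast
  have ic: "inv_card H \<le> inv_card K" using inv_card_mono[OF KH Kne] .
  have "curvature H actv acte ang DV DE
      = curvature K actv acte ang C CE - 2 * pi * inv_card K + curvature H actv acte ang DV' DE'"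
    unfolding curv_eq sV sE trV(2) trE(2) by simp
  then show ?thesis using kK rest ic by (smt (verit) pi_gt_zero mult_left_mono)

qed


lemma part1:
  assumes H: "subgroup H G"
  shows "H_section H V E ends actv acte DV DE \<Longrightarrow> spurless DV DE ends \<Longrightarrow> DE \<noteq> {} \<Longrightarrow>
    curvature H actv acte ang DV DE \<le> \<alpha>"
proof (induction "card (orbits H actv DV)" arbitrary: DV DE rule: less_induct)
  case less
  show ?case
    apply (rule step[OF H less.prems])
    using less.hyps by blast
qed

lemma part2:
  assumes H: "subgroup H G" and sec: "H_section H V E ends actv acte DV DE"
    and DVne: "DV \<noteq> {}" and DEe: "DE = {}"
  shows "curvature H actv acte ang DV DE > 0 \<longleftrightarrow> (\<exists>v. DV = {v}) \<and> finite H"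
proof -
  have HG: "\<And>h. h \<in> H \<Longrightarrow> h \<in> carrier G" by (rule subgroup.mem_carrier[OF H])
  have DVV: "DV \<subseteq> V" and invV: "\<And>h x. h \<in> H \<Longrightarrow> x \<in> DV \<Longrightarrow> actv h x \<in> DV"
    and finV: "finite (orbits H actv DV)"
    using sec unfolding H_section_def by (auto simp: image_subset_iff)
  have "ES H DE = 0" unfolding ES_def orbits_def DEe by simp
  then have k: "curvature H actv acte ang DV DE = 2 * pi * inv_card H - VS H DV"
    unfolding curv_eq by simp
  have one: "\<one>\<^bsub>G\<^esub> \<in> H" by (rule subgroup.one_closed[OF H])
  show ?thesis
  proof (cases "finite H")
    case False
    then have "inv_card H = 0" unfolding inv_card_def by simp
    then show ?thesis using k VS_nonneg[of H DV] False by simp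
  next
    case fin: True
    have cH: "0 < card H" using fin one card_gt_0_iff by blast
    have icH: "inv_card H = 1 / real (card H)" unfolding inv_card_def using fin by simp
    have stab_ne: "stab H actv x \<noteq> {}" if "x \<in> V" for x
      unfolding stab_def using one gv.act_one[OF that] by blast
    have term_ge: "inv_card H \<le> inv_card (stab H actv x)" if "x \<in> V" for x
    proof -
      have "stab H actv x \<subseteq> H" unfolding stab_def by blast
      then show ?thesis by (rule inv_card_mono[OF _ stab_ne[OF that]])
    qed
    have rep: "(SOME y. y \<in> orbit H actv x) \<in> orbit H actv x" if "x \<in> DV" for x
    proof -
      have "x \<in> V" using that DVV by blast
      then show ?thesis by (rule gv.orbit_some[OF H])
    qed
    have repDV: "(SOME y. y \<in> orbit H actv x) \<in> DV" if xx: "x \<in> DV" for x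
    proof -
      obtain h where "h \<in> H" "(SOME y. y \<in> orbit H actv x) = actv h x"
        using rep[OF xx] unfolding orbit_def by blast
      then show ?thesis using invV[OF _ xx] by simp
    qed
    define tm where "tm Orb = pi * inv_card (stab H actv (SOME v. v \<in> Orb))" for Orb
    have tm_nonneg: "0 \<le> tm Orb" for Orb unfolding tm_def by (rule mult_nonneg_nonneg[OF pi_ge_zero inv_card_nonneg])
    have tm_ge: "pi * inv_card H \<le> tm (orbit H actv x)" if "x \<in> DV" for x
      unfolding tm_def using term_ge repDV[OF that] DVV by (simp add: subset_iff)
    have VSdef: "VS H DV = sum tm (orbits H actv DV)" unfolding VS_def tm_def by simp
    show ?thesis
    proof (cases "\<exists>v. DV = {v}")
      case True
      then obtain v where v: "DV = {v}" by blast
      have vV: "v \<in> V" using v DVV by blast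
      have orb: "orbit H actv v = {v}"
        using invV v gv.orbit_self[OF H vV] unfolding orbit_def by blast
      have st: "stab H actv v = H" unfolding stab_def using invV v by blast
      have "VS H DV = pi * inv_card H" unfolding VS_def orbits_def v by (simp add: orb st)
      then have "curvature H actv acte ang DV DE = pi * inv_card H" using k by simp
      moreover have "0 < inv_card H" using icH cH by simp
      ultimately show ?thesis using True fin by simp
    next
      case False
      then obtain u w where uw: "u \<in> DV" "w \<in> DV" "u \<noteq> w" using DVne by blast
      have "2 * pi * inv_card H \<le> VS H DV"
      proof (cases "orbit H actv u = orbit H actv w")
        case False
        have sub: "{orbit H actv u, orbit H actv w} \<subseteq> orbits H actv DV"
          unfolding orbits_def using uw by blast
        have "sum tm {orbit H actv u, orbit H actv w} \<le> sum tm (orbits H actv DV)"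
          using sum_mono2[OF finV sub] tm_nonneg by blast
        moreover have "sum tm {orbit H actv u, orbit H actv w} = tm (orbit H actv u) + tm (orbit H actv w)"
          using False by simp
        ultimately show ?thesis unfolding VSdef using tm_ge[OF uw(1)] tm_ge[OF uw(2)] by linarith
      next
        case True
        define r where "r = (SOME y. y \<in> orbit H actv u)"
        have rO: "r \<in> orbit H actv u" unfolding r_def using rep[OF uw(1)] .
        have rDV: "r \<in> DV" unfolding r_def using repDV[OF uw(1)] .
        have rV: "r \<in> V" using rDV DVV by blast
        have uV: "u \<in> V" using uw DVV by blast
        have orr: "orbit H actv r = orbit H actv u" using gv.orbit_mem_eq[OF H uV rO] .
        obtain y where y: "y \<in> {u, w}" "y \<noteq> r" using uw(3) by blast
        have "y \<in> orbit H actv r"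
          using y(1) orr True gv.orbit_self[OF H] uw DVV by blast
        then obtain g where g: "g \<in> H" "y = actv g r" unfolding orbit_def by blast
        have gn: "g \<notin> stab H actv r" unfolding stab_def using g y(2) by simp
        have StH: "stab H actv r \<subseteq> H" unfolding stab_def by blast
        have c2: "2 * card (stab H actv r) \<le> card H"
          using gv.coset_card[OF H fin gv.stab_subgroup[OF H rV] StH g(1) gn] .
        have finS: "finite (stab H actv r)" using finite_subset[OF StH fin] .
        have cS: "0 < card (stab H actv r)" using finS stab_ne[OF rV] card_gt_0_iff by blast
        have "2 * inv_card H \<le> inv_card (stab H actv r)"
          unfolding inv_card_def using fin finS cH cS c2
          by (simp add: field_simps)
        then have "2 * pi * inv_card H \<le> tm (orbit H actv u)"
          unfolding tm_def r_def[symmetric] using pi_gt_zero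
          by (metis mult.assoc mult.commute mult_le_cancel_left_pos)
        moreover have "tm (orbit H actv u) \<le> sum tm (orbits H actv DV)"
          using member_le_sum[of "orbit H actv u" "orbits H actv DV" tm] tm_nonneg finV uw(1)
          unfolding orbits_def by blast
        ultimately show ?thesis unfolding VSdef by linarith
      qed
      then show ?thesis using k False by simp
    qed
  qed
qed

end

theorem proposition7p2:
  fixes G :: "('g, 'b) monoid_scheme"
    and V :: "'v set" and E :: "'e set" and ends :: "'e \<Rightarrow> 'v multiset"
    and actv :: "'g \<Rightarrow> 'v \<Rightarrow> 'v" and acte :: "'g \<Rightarrow> 'e \<Rightarrow> 'e" and ang :: "'e \<Rightarrow> real"
    and \<alpha> :: real and H :: "'g set" and DV :: "'v set" and DE :: "'e set"
  assumes "angled_G_graph G V E ends actv acte ang"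
    and "\<alpha> \<le> 0"
    and "\<And>K DV' DE'. subgroup K G \<Longrightarrow> regular_section K V E ends actv acte DV' DE'
           \<Longrightarrow> curvature K actv acte ang DV' DE' \<le> \<alpha>"
    and "subgroup H G"
    and "H_section H V E ends actv acte DV DE"
    and "spurless DV DE ends"
    and "DV \<noteq> {}"
  shows "(DE \<noteq> {} \<longrightarrow> curvature H actv acte ang DV DE \<le> \<alpha>) \<and>
         (curvature H actv acte ang DV DE > 0 \<longleftrightarrow>
            ((\<exists>v. DV = {v}) \<and> DE = {} \<and> finite H))"
proof -
  interpret P: pset G V E ends actv acte ang \<alpha>
    using assms(1-3) unfolding pset_def by blast
  have p1: "DE \<noteq> {} \<longrightarrow> curvature H actv acte ang DV DE \<le> \<alpha>"
    using P.part1[OF assms(4) assms(5) assms(6)] by blast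
  show ?thesis
  proof (cases "DE = {}")
    case True
    then show ?thesis using P.part2[OF assms(4) assms(5) assms(7) True] by simp
  next
    case False
    then show ?thesis using p1 assms(2) by simp
  qed
qed

end
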